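(* Let $(A,\succ,\prec,\omega)$ be a quadratic Leibniz-dendriform algebra and $r\in A\otimes A$ such that $r+\tau(r)$ is invariant. Define $P:A\to A$ by $P(x)=T_r(\omega^\sharp(x))$. Then $r$ satisfies $S(r)=0$ if and only if for all $x,y\in A$: $P(x)\succ P(y)=P\big(P(x)\succ y+x\succ P(y)-x\succ T_{r+\tau(r)}\omega^\sharp(y)\big)$ and $P(x)\prec P(y)=P\big(P(x)\prec y+x\prec P(y)-x\prec T_{r+\tau(r)}\omega^\sharp(y)\big)$.
   Context: $\langle\cdot,\cdot\rangle$ is the natural pairing, $I$ the identity, $\tau(a\otimes b)=b\otimes a$. A Leibniz-dendriform algebra is a vector space $A$ with bilinear operations $\succ,\prec$ such that, with $x\circ y:=x\succ y+x\prec y$, for all $x,y,z$: $(x\circ y)\succ z=x\succ(y\succ z)-y\succ(x\succ z)$, $y\prec(x\circ z)+(x\succ y)\prec z=x\succ(y\prec z)$, $x\prec(y\circ z)=(x\prec y)\prec z+y\succ(x\prec z)$. A quadratic Leibniz-dendriform algebra is one with a non-degenerate symmetric bilinear form $\omega$ with $\omega(x\prec y,z)=\omega(x,y\circ z+z\circ y)$ and $\omega(x\succ y,z)=-\omega(y,x\circ z)$ for all $x,y,z$; $\omega^\sharp:A\to A^*$ is $\langle\omega^\sharp(x),y\rangle=\omega(x,y)$. Write $x\odot y:=x\succ y+y\prec x$, $x\star y:=x\circ y+y\circ x$; $L_*(x)y=x*y$, $R_*(x)y=y*x$; $L_\odot:=L_\succ+R_\prec$, $L_\star:=L_\circ+R_\circ$.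 For $r=\sum_ia_i\otimes b_i$: $T_r:A^*\to A$, $\langle T_r(\zeta),\eta\rangle=\langle r,\zeta\otimes\eta\rangle$; $S(r):=\sum_{i,j}\big(a_i\otimes a_j\otimes (b_j\circ b_i)-a_i\otimes (b_i\odot a_j)\otimes b_j-(a_i\succ a_j)\otimes b_i\otimes b_j\big)$. $s\in A\otimes A$ is invariant if for all $x$: $(L_\odot(x)\otimes I-I\otimes R_\circ(x))s=0$ and $(L_\star(x)\otimes I-I\otimes R_\prec(x))\tau(s)=0$. *)

theory Defs
  imports Main "HOL-Library.Function_Algebras"
begin

(* The algebra A is finite-dimensional over a field 'k; we fix a basis
indexed by a finite type 'n and identify A with 'n \<Rightarrow> 'k (coordinates).
A\<^sup>* is identified with 'n \<Rightarrow> 'k via the dual basis, so that the natural pairing is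
\<langle>\<zeta>, x\<rangle> = \<Sum>i. \<zeta> i * x i.  Tensors in A\<otimes>A (resp. A\<otimes>A\<otimes>A) are given by their
coefficient arrays 'n \<Rightarrow> 'n \<Rightarrow> 'k (resp. 'n \<Rightarrow> 'n \<Rightarrow> 'n \<Rightarrow> 'k) w.r.t. the basis
e i \<otimes> e j (resp. e i \<otimes> e j \<otimes> e k). *)

type_synonym ('k,'n) op = "('n \<Rightarrow> 'k) \<Rightarrow> ('n \<Rightarrow> 'k) \<Rightarrow> ('n \<Rightarrow> 'k)"

definition bvec :: "'n \<Rightarrow> 'n \<Rightarrow> 'k::field" where
  "bvec i = (\<lambda>j. if j = i then 1 else 0)"

definition smul :: "'k::field \<Rightarrow> ('n \<Rightarrow> 'k) \<Rightarrow> ('n \<Rightarrow> 'k)" where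
  "smul c x = (\<lambda>i. c * x i)"

definition bilinear_op :: "('k::field,'n) op \<Rightarrow> bool" where
  "bilinear_op m \<longleftrightarrow>
     (\<forall>x y z. m (x + y) z = m x z + m y z) \<and>
     (\<forall>x y z. m x (y + z) = m x y + m x z) \<and>
     (\<forall>c x y. m (smul c x) y = smul c (m x y)) \<and>
     (\<forall>c x y. m x (smul c y) = smul c (m x y))"

definition bilinear_form :: "(('n \<Rightarrow> 'k::field) \<Rightarrow> ('n \<Rightarrow> 'k) \<Rightarrow> 'k) \<Rightarrow> bool" where
  "bilinear_form w \<longleftrightarrow>
     (\<forall>x y z. w (x + y) z = w x z + w y z) \<and>
     (\<forall>x y z. w x (y + z) = w x y + w x z) \<and>
     (\<forall>c x y. w (smul c x) y = c * w x y) \<and>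
     (\<forall>c x y. w x (smul c y) = c * w x y)"

definition circ_op :: "('k::field,'n) op \<Rightarrow> ('k,'n) op \<Rightarrow> ('k,'n) op" where
  "circ_op sc pr = (\<lambda>x y. sc x y + pr x y)"

definition odot_op :: "('k::field,'n) op \<Rightarrow> ('k,'n) op \<Rightarrow> ('k,'n) op" where
  "odot_op sc pr = (\<lambda>x y. sc x y + pr y x)"

definition star_op :: "('k::field,'n) op \<Rightarrow> ('k,'n) op \<Rightarrow> ('k,'n) op" where
  "star_op sc pr = (\<lambda>x y. circ_op sc pr x y + circ_op sc pr y x)"

definition LD_algebra :: "('k::field,'n) op \<Rightarrow> ('k,'n) op \<Rightarrow> bool" where
  "LD_algebra sc pr \<longleftrightarrow> bilinear_op sc \<and> bilinear_op pr \<and>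
    (\<forall>x y z. sc (circ_op sc pr x y) z = sc x (sc y z) - sc y (sc x z)) \<and>
    (\<forall>x y z. pr y (circ_op sc pr x z) + pr (sc x y) z = sc x (pr y z)) \<and>
    (\<forall>x y z. pr x (circ_op sc pr y z) = pr (pr x y) z + sc y (pr x z))"

definition quadratic_LD_algebra ::
  "('k::field,'n) op \<Rightarrow> ('k,'n) op \<Rightarrow> (('n \<Rightarrow> 'k) \<Rightarrow> ('n \<Rightarrow> 'k) \<Rightarrow> 'k) \<Rightarrow> bool" where
  "quadratic_LD_algebra sc pr w \<longleftrightarrow> LD_algebra sc pr \<and> bilinear_form w \<and>
    (\<forall>x y. w x y = w y x) \<and>
    (\<forall>x. (\<forall>y. w x y = 0) \<longrightarrow> x = 0) \<and>
    (\<forall>x y z. w (pr x y) z = w x (circ_op sc pr y z + circ_op sc pr z y)) \<and>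
    (\<forall>x y z. w (sc x y) z = - w y (circ_op sc pr x z))"

definition tau2 :: "('n \<Rightarrow> 'n \<Rightarrow> 'k) \<Rightarrow> ('n \<Rightarrow> 'n \<Rightarrow> 'k)" where
  "tau2 s = (\<lambda>p q. s q p)"

definition tensmap :: "(('n::finite \<Rightarrow> 'k::field) \<Rightarrow> ('n \<Rightarrow> 'k)) \<Rightarrow> (('n \<Rightarrow> 'k) \<Rightarrow> ('n \<Rightarrow> 'k))
    \<Rightarrow> ('n \<Rightarrow> 'n \<Rightarrow> 'k) \<Rightarrow> ('n \<Rightarrow> 'n \<Rightarrow> 'k)" where
  "tensmap f g s = (\<lambda>p q. \<Sum>i\<in>UNIV. \<Sum>j\<in>UNIV. s i j * f (bvec i) p * g (bvec j) q)"

definition invariant_tensor :: "('k::field,'n::finite) op \<Rightarrow> ('k,'n) op \<Rightarrow> ('n \<Rightarrow> 'n \<Rightarrow> 'k) \<Rightarrow> bool" where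
  "invariant_tensor sc pr s \<longleftrightarrow> (\<forall>x.
     (\<lambda>p q. tensmap (\<lambda>y. odot_op sc pr x y) id s p q - tensmap id (\<lambda>y. circ_op sc pr y x) s p q)
       = (\<lambda>p q. 0) \<and>
     (\<lambda>p q. tensmap (\<lambda>y. star_op sc pr x y) id (tau2 s) p q - tensmap id (\<lambda>y. pr y x) (tau2 s) p q)
       = (\<lambda>p q. 0))"

(* T_r : A\<^sup>* \<rightarrow> A, \<langle>T_r \<zeta>, \<eta>\<rangle> = \<langle>r, \<zeta>\<otimes>\<eta>\<rangle> *)
definition Tmap :: "('n::finite \<Rightarrow> 'n \<Rightarrow> 'k::field) \<Rightarrow> ('n \<Rightarrow> 'k) \<Rightarrow> ('n \<Rightarrow> 'k)" where
  "Tmap r \<zeta> = (\<lambda>j. \<Sum>i\<in>UNIV. r i j * \<zeta> i)"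

(* \<omega>\<^sup>\<sharp>(x) = \<Sum>i \<omega>(x, e_i) e_i\<^sup>* *)
definition sharp :: "(('n \<Rightarrow> 'k::field) \<Rightarrow> ('n \<Rightarrow> 'k) \<Rightarrow> 'k) \<Rightarrow> ('n \<Rightarrow> 'k) \<Rightarrow> ('n \<Rightarrow> 'k)" where
  "sharp w x = (\<lambda>i. w x (bvec i))"

(* S(r) \<in> A\<otimes>A\<otimes>A, expanded with r = \<Sum>_{i,j} r i j e_i \<otimes> e_j *)
definition S_tensor :: "('k::field,'n::finite) op \<Rightarrow> ('k,'n) op \<Rightarrow> ('n \<Rightarrow> 'n \<Rightarrow> 'k)
    \<Rightarrow> ('n \<Rightarrow> 'n \<Rightarrow> 'n \<Rightarrow> 'k)" where
  "S_tensor sc pr r = (\<lambda>p q s. \<Sum>i\<in>UNIV. \<Sum>j\<in>UNIV. \<Sum>k\<in>UNIV. \<Sum>l\<in>UNIV. r i j * r k l *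
      (bvec i p * bvec k q * circ_op sc pr (bvec l) (bvec j) s
       - bvec i p * odot_op sc pr (bvec j) (bvec k) q * bvec l s
       - sc (bvec i) (bvec k) p * bvec j q * bvec l s))"

end

theory Submission
  imports Defs "HOL.Vector_Spaces"
begin

lemma sum_fun_apply: "(\<Sum>i\<in>A. f i) x = (\<Sum>i\<in>A. f i x)"
  by (induction A rule: infinite_finite_induct) auto

lemma delta_sum: "(\<Sum>p::'n::finite\<in>UNIV. if p = i then g p else 0) = (g i :: 'k::comm_monoid_add)"
  by (simp add: sum.delta)

lemma bvec_sym: "bvec i j = bvec j i"
  by (auto simp: bvec_def)

lemma bvec_sum1: "(\<Sum>p::'n::finite\<in>UNIV. bvec i p * f p) = (f i :: 'k::field)"
proof -
  have "(\<Sum>p\<in>UNIV. bvec i p * f p) = (\<Sum>p\<in>UNIV. if p = i then f p else 0)"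
    by (rule sum.cong) (auto simp: bvec_def)
  then show ?thesis by (simp add: delta_sum)
qed

lemma bvec_sum2: "(\<Sum>p::'n::finite\<in>UNIV. f p * bvec i p) = (f i :: 'k::field)"
  using bvec_sum1[of i f] by (simp add: mult.commute)

lemma bvec_sum3: "(\<Sum>p::'n::finite\<in>UNIV. f p * bvec p i) = (f i :: 'k::field)"
  using bvec_sum2[of f i] by (simp add: bvec_sym)

lemma basis_expand: "(v::'n::finite \<Rightarrow> 'k::field) = (\<Sum>j\<in>UNIV. smul (v j) (bvec j))"
  by (rule ext) (simp add: sum_fun_apply smul_def bvec_sum3)

lemma lin_expand:
  fixes \<phi> :: "('n::finite \<Rightarrow> 'k::field) \<Rightarrow> 'k"
  assumes add: "\<And>x y. \<phi> (x + y) = \<phi> x + \<phi> y" and sm: "\<And>c x. \<phi> (smul c x) = c * \<phi> x"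
  shows "\<phi> v = (\<Sum>j\<in>UNIV. v j * \<phi> (bvec j))"
proof -
  have "\<phi> 0 = \<phi> 0 + \<phi> 0" using add[of 0 0] by simp
  then have z: "\<phi> 0 = 0" by (metis add_cancel_right_right)
  have F: "finite F \<Longrightarrow> \<phi> (\<Sum>j\<in>F. smul (v j) (bvec j)) = (\<Sum>j\<in>F. v j * \<phi> (bvec j))" for F
  proof (induction F rule: finite_induct)
    case empty then show ?case by (simp only: sum.empty z)
  next
    case (insert x F)
    show ?case by (simp only: sum.insert[OF insert(1,2)] add sm insert(3))
  qed
  have e: "v = (\<Sum>j\<in>UNIV. smul (v j) (bvec j))" by (rule basis_expand)
  have "\<phi> v = \<phi> (\<Sum>j\<in>UNIV. smul (v j) (bvec j))" using e by (rule arg_cong)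
  then show ?thesis using F[OF finite_UNIV] by simp
qed

lemma centroid:
  fixes m :: "'v \<Rightarrow> 'v \<Rightarrow> 'v::ab_group_add" and P Q R :: "'v \<Rightarrow> 'v"
  assumes m_diff1: "\<And>a b c. m (a - b) c = m a c - m b c"
    and m_diff2: "\<And>a b c. m c (a - b) = m c a - m c b"
    and Q_diff: "\<And>a b. Q (a - b) = Q a - Q b"
    and R_diff: "\<And>a b. R (a - b) = R a - R b"
    and PRQ: "\<And>v. P v = R v - Q v"
    and cen1: "\<And>a b. R (m a b) = m (R a) b" and cen2: "\<And>a b. R (m a b) = m a (R b)"
    and H: "m (P x) (P y) = P (m x (P y) - m (Q x) y)"
  shows "m (Q x) (Q y) = Q (m x (Q y) - m (P x) y)"
proof -
  define u where "u = m x (R y) - m x (Q y) - m (Q x) y"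
  have Q0: "Q 0 = 0" using Q_diff[of 0 0] by simp
  have Qneg: "Q (- v) = - Q v" for v using Q_diff[of 0 v] by (simp add: Q0)
  have e1: "m (P x) (P y) = R (m x (R y)) - R (m x (Q y)) - R (m (Q x) y) + m (Q x) (Q y)"
    by (simp add: PRQ[of x] PRQ[of y] m_diff1 m_diff2 cen1[of x "R y", symmetric]
        cen1[of x "Q y", symmetric] cen2[of "Q x" y, symmetric] algebra_simps)
  have e2: "P (m x (P y) - m (Q x) y) = R (m x (R y)) - R (m x (Q y)) - R (m (Q x) y) - Q u"
    by (simp add: PRQ[of "_ - _"] PRQ[of y] m_diff2 R_diff u_def)
  have e3': "Q u + m (Q x) (Q y) = 0" using H e1 e2 by (simp add: algebra_simps)
  have e3: "m (Q x) (Q y) = - Q u" using e3' by (simp add: eq_neg_iff_add_eq_0 add.commute)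
  have e4: "m x (Q y) - m (P x) y = - u"
    by (simp add: u_def PRQ[of x] m_diff1 cen1[symmetric] cen2[symmetric])
  show ?thesis using e3 e4 by (simp add: Qneg)
qed

lemma vs_smul: "vector_space (smul :: 'kk::field \<Rightarrow> ('nn \<Rightarrow> 'kk) \<Rightarrow> _)"
  unfolding vector_space_def smul_def by (auto simp: fun_eq_iff algebra_simps)

lemma mod_smul: "module (smul :: 'kk::field \<Rightarrow> ('nn \<Rightarrow> 'kk) \<Rightarrow> _)"
  using vs_smul module_iff_vector_space by blast

lemma bvec_inj: "bvec i = (bvec j :: 'nn \<Rightarrow> 'kk::field) \<Longrightarrow> i = j"
proof -
  assume h: "bvec i = (bvec j :: 'nn \<Rightarrow> 'kk::field)"
  have "bvec i i = (bvec j i :: 'kk)" using h by simp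
  then show ?thesis by (simp add: bvec_def split: if_split_asm)
qed

lemma fdv: "finite_dimensional_vector_space (smul :: 'kk::field \<Rightarrow> ('nn::finite \<Rightarrow> 'kk) \<Rightarrow> _) (range bvec)"
  unfolding finite_dimensional_vector_space_def finite_dimensional_vector_space_axioms_def
proof (intro conjI vs_smul)
  show "finite (range (bvec :: 'nn \<Rightarrow> 'nn \<Rightarrow> 'kk))" by simp
  show "\<not> module.dependent smul (range (bvec :: 'nn \<Rightarrow> 'nn \<Rightarrow> 'kk))"
  proof
    assume "module.dependent smul (range (bvec :: 'nn \<Rightarrow> 'nn \<Rightarrow> 'kk))"
    then obtain t u v where t: "finite t" "t \<subseteq> range bvec" "(\<Sum>v\<in>t. smul (u v) v) = (0 :: 'nn \<Rightarrow> 'kk)"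
      and v: "v \<in> t" "u v \<noteq> 0"
      unfolding module.dependent_explicit[OF mod_smul] by blast
    obtain i where vi: "v = bvec i" using v t by blast
    have "(\<Sum>v\<in>t. smul (u v) v) i = (\<Sum>v'\<in>t. if v' = bvec i then u v' else 0)"
      unfolding sum_fun_apply smul_def
    proof (rule sum.cong)
      fix v' assume "v' \<in> t"
      then obtain j where j: "v' = bvec j" using t by blast
      show "u v' * v' i = (if v' = bvec i then u v' else 0)"
      proof (cases "j = i")
        case True
        have e: "v' = bvec i" using j True by simp
        have "v' i = 1" unfolding e by (simp add: bvec_def)
        then show ?thesis using e by simp
      next
        case False
        have n: "v' \<noteq> bvec i"
        proof
          assume a: "v' = bvec i"
          have "bvec j = (bvec i :: 'nn \<Rightarrow> 'kk)" using j a by simp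
          then have "j = i" by (rule bvec_inj)
          then show False using False by simp
        qed
        have "v' i = bvec j i" using j by simp
        also have "\<dots> = 0" using False by (simp add: bvec_def)
        finally have z: "v' i = 0" .
        show ?thesis by (simp only: z n mult_zero_right if_False)
      qed
    qed simp
    also have "\<dots> = u v" using t(1) v(1) vi by (simp add: sum.delta')
    finally show False using t(3) v(2) by simp
  qed
  show "module.span smul (range (bvec :: 'nn \<Rightarrow> 'nn \<Rightarrow> 'kk)) = UNIV"
  proof -
    have "x \<in> module.span smul (range (bvec :: 'nn \<Rightarrow> 'nn \<Rightarrow> 'kk))" for x
      by (subst basis_expand[of x])
        (intro module.span_sum[OF mod_smul] module.span_scale[OF mod_smul] module.span_base[OF mod_smul], simp)
    then show ?thesis by blast
  qed
qed

lemma gen_expand_s: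
  fixes \<phi> :: "('n \<Rightarrow> 'k::field) \<Rightarrow> 'k"
  assumes add: "\<And>x y. \<phi> (x + y) = \<phi> x + \<phi> y" and sm: "\<And>c x. \<phi> (smul c x) = c * \<phi> x"
    and F: "finite F"
  shows "\<phi> (\<Sum>j\<in>F. smul (c j) (b j)) = (\<Sum>j\<in>F. c j * \<phi> (b j))"
  using F
proof (induction F rule: finite_induct)
  case empty
  have "\<phi> 0 = \<phi> 0 + \<phi> 0" using add[of 0 0] by simp
  then have z: "\<phi> 0 = 0" by (metis add_cancel_right_right)
  then show ?case by (simp only: sum.empty z)
next
  case (insert x F)
  show ?case by (simp only: sum.insert[OF insert(1,2)] add sm insert(3))
qed

lemma gen_expand_v:
  fixes L :: "('n \<Rightarrow> 'k::field) \<Rightarrow> ('m \<Rightarrow> 'k)"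
  assumes add: "\<And>x y. L (x + y) = L x + L y" and sm: "\<And>c x. L (smul c x) = smul c (L x)"
    and F: "finite F"
  shows "L (\<Sum>j\<in>F. smul (c j) (b j)) = (\<Sum>j\<in>F. smul (c j) (L (b j)))"
  using F
proof (induction F rule: finite_induct)
  case empty
  have "L 0 = L 0 + L 0" using add[of 0 0] by simp
  then have z: "L 0 = 0" by (metis add_cancel_right_right)
  then show ?case by (simp only: sum.empty z)
next
  case (insert x F)
  show ?case by (simp only: sum.insert[OF insert(1,2)] add sm insert(3))
qed

lemma smul_add: "smul c (a + b) = smul c a + smul c b" by (rule ext) (simp add: smul_def algebra_simps)
lemma smul_diff: "smul c (a - b) = smul c a - smul c b" by (rule ext) (simp add: smul_def algebra_simps)


locale QLD =
  fixes sc pr :: "('k::field,'n::finite) op" and w :: "('n \<Rightarrow> 'k) \<Rightarrow> ('n \<Rightarrow> 'k) \<Rightarrow> 'k"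
    and r :: "'n \<Rightarrow> 'n \<Rightarrow> 'k"
  assumes quad: "quadratic_LD_algebra sc pr w"
begin

lemmas QD = quad[unfolded quadratic_LD_algebra_def LD_algebra_def bilinear_op_def bilinear_form_def]

lemmas Qsc = QD[THEN conjunct1, THEN conjunct1]
lemmas Qpr = QD[THEN conjunct1, THEN conjunct2, THEN conjunct1]
lemmas Qw = QD[THEN conjunct2, THEN conjunct1]
lemmas Qrest = QD[THEN conjunct2, THEN conjunct2]

lemmas sc_add1 = Qsc[THEN conjunct1, rule_format]
lemmas sc_add2 = Qsc[THEN conjunct2, THEN conjunct1, rule_format]
lemmas sc_sm1 = Qsc[THEN conjunct2, THEN conjunct2, THEN conjunct1, rule_format]
lemmas sc_sm2 = Qsc[THEN conjunct2, THEN conjunct2, THEN conjunct2, rule_format]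
lemmas pr_add1 = Qpr[THEN conjunct1, rule_format]
lemmas pr_add2 = Qpr[THEN conjunct2, THEN conjunct1, rule_format]
lemmas pr_sm1 = Qpr[THEN conjunct2, THEN conjunct2, THEN conjunct1, rule_format]
lemmas pr_sm2 = Qpr[THEN conjunct2, THEN conjunct2, THEN conjunct2, rule_format]
lemmas w_add1 = Qw[THEN conjunct1, rule_format]
lemmas w_add2 = Qw[THEN conjunct2, THEN conjunct1, rule_format]
lemmas w_sm1 = Qw[THEN conjunct2, THEN conjunct2, THEN conjunct1, rule_format]
lemmas w_sm2 = Qw[THEN conjunct2, THEN conjunct2, THEN conjunct2, rule_format]
lemmas w_sym = Qrest[THEN conjunct1, rule_format]
lemma w_nd: "(\<And>y. w x y = 0) \<Longrightarrow> x = 0" using Qrest[THEN conjunct2, THEN conjunct1] by blast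
lemmas A1 = Qrest[THEN conjunct2, THEN conjunct2, THEN conjunct1, rule_format]
lemmas A2 = Qrest[THEN conjunct2, THEN conjunct2, THEN conjunct2, rule_format]

lemma sc_0: "sc 0 z = 0" using sc_add1[of 0 0 z] by (metis add_cancel_right_right add_0)
lemma sc_0': "sc z 0 = 0" using sc_add2[of z 0 0] by (metis add_cancel_right_right add_0)
lemma pr_0: "pr 0 z = 0" using pr_add1[of 0 0 z] by (metis add_cancel_right_right add_0)
lemma pr_0': "pr z 0 = 0" using pr_add2[of z 0 0] by (metis add_cancel_right_right add_0)
lemma w_0: "w 0 z = 0" using w_add1[of 0 0 z] by (metis add_cancel_right_right add_0)
lemma w_0': "w z 0 = 0" using w_add2[of z 0 0] by (metis add_cancel_right_right add_0)

lemma sc_diff1: "sc (x - y) z = sc x z - sc y z" using sc_add1[of "x - y" y z] by (simp add: eq_diff_eq)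
lemma sc_diff2: "sc z (x - y) = sc z x - sc z y" using sc_add2[of z "x - y" y] by (simp add: eq_diff_eq)
lemma pr_diff1: "pr (x - y) z = pr x z - pr y z" using pr_add1[of "x - y" y z] by (simp add: eq_diff_eq)
lemma pr_diff2: "pr z (x - y) = pr z x - pr z y" using pr_add2[of z "x - y" y] by (simp add: eq_diff_eq)
lemma w_diff1: "w (x - y) z = w x z - w y z" using w_add1[of "x - y" y z] by (simp add: eq_diff_eq)
lemma w_diff2: "w z (x - y) = w z x - w z y" using w_add2[of z "x - y" y] by (simp add: eq_diff_eq)
lemma sc_neg1: "sc (- x) z = - sc x z" using sc_diff1[of 0 x z] by (simp add: sc_0)
lemma sc_neg2: "sc z (- x) = - sc z x" using sc_diff2[of z 0 x] by (simp add: sc_0')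
lemma pr_neg1: "pr (- x) z = - pr x z" using pr_diff1[of 0 x z] by (simp add: pr_0)
lemma pr_neg2: "pr z (- x) = - pr z x" using pr_diff2[of z 0 x] by (simp add: pr_0')
lemma w_neg1: "w (- x) z = - w x z" using w_diff1[of 0 x z] by (simp add: w_0)
lemma w_neg2: "w z (- x) = - w z x" using w_diff2[of z 0 x] by (simp add: w_0')

lemmas lin_simps = sc_add1 sc_add2 pr_add1 pr_add2 w_add1 w_add2 sc_diff1 sc_diff2 pr_diff1 pr_diff2
  w_diff1 w_diff2 sc_neg1 sc_neg2 pr_neg1 pr_neg2 w_neg1 w_neg2

lemma w_nd2: "(\<And>z. w x z = w y z) \<Longrightarrow> x = y"
  using w_nd[of "x - y"] by (simp add: w_diff1)

lemma w_exp1: "w v y = (\<Sum>j\<in>UNIV. v j * w (bvec j) y)"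
  by (rule lin_expand[where \<phi>="\<lambda>v. w v y"]) (simp_all add: w_add1 w_sm1)
lemma w_exp2: "w y v = (\<Sum>j\<in>UNIV. v j * w y (bvec j))"
  by (rule lin_expand[where \<phi>="\<lambda>v. w y v"]) (simp_all add: w_add2 w_sm2)
lemma sc_exp1: "sc v y q = (\<Sum>j\<in>UNIV. v j * sc (bvec j) y q)"
  by (rule lin_expand[where \<phi>="\<lambda>v. sc v y q"]) (simp only: sc_add1 plus_fun_apply, simp only: sc_sm1, simp add: smul_def)
lemma sc_exp2: "sc y v q = (\<Sum>j\<in>UNIV. v j * sc y (bvec j) q)"
  by (rule lin_expand[where \<phi>="\<lambda>v. sc y v q"]) (simp only: sc_add2 plus_fun_apply, simp only: sc_sm2, simp add: smul_def)
lemma pr_exp1: "pr v y q = (\<Sum>j\<in>UNIV. v j * pr (bvec j) y q)"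
  by (rule lin_expand[where \<phi>="\<lambda>v. pr v y q"]) (simp only: pr_add1 plus_fun_apply, simp only: pr_sm1, simp add: smul_def)
lemma pr_exp2: "pr y v q = (\<Sum>j\<in>UNIV. v j * pr y (bvec j) q)"
  by (rule lin_expand[where \<phi>="\<lambda>v. pr y v q"]) (simp only: pr_add2 plus_fun_apply, simp only: pr_sm2, simp add: smul_def)

definition "P x = Tmap r (sharp w x)"
definition "Q x = Tmap (tau2 r) (sharp w x)"
definition "R x = P x + Q x"

lemma P_apply: "P x j = (\<Sum>i\<in>UNIV. r i j * w x (bvec i))"
  by (simp add: P_def Tmap_def sharp_def)
lemma Q_apply: "Q x j = (\<Sum>i\<in>UNIV. r j i * w x (bvec i))"
  by (simp add: Q_def Tmap_def sharp_def tau2_def)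

lemma P_add: "P (x + y) = P x + P y"
  by (rule ext) (simp add: P_apply w_add1 distrib_left sum.distrib)
lemma Q_add: "Q (x + y) = Q x + Q y"
  by (rule ext) (simp add: Q_apply w_add1 distrib_left sum.distrib)
lemma P_diff: "P (x - y) = P x - P y"
  by (rule ext) (simp add: P_apply w_diff1 right_diff_distrib sum_subtractf)
lemma Q_diff: "Q (x - y) = Q x - Q y"
  by (rule ext) (simp add: Q_apply w_diff1 right_diff_distrib sum_subtractf)
lemma R_add: "R (x + y) = R x + R y"
  by (simp add: R_def P_add Q_add)
lemma R_diff: "R (x - y) = R x - R y"
  by (simp add: R_def P_diff Q_diff)

lemma adj: "w (P x) y = w x (Q y)"
proof -
  have "w (P x) y = (\<Sum>j\<in>UNIV. \<Sum>i\<in>UNIV. r i j * w x (bvec i) * w y (bvec j))"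
    by (simp add: w_exp1[of "P x"] P_apply sum_distrib_right w_sym[of "bvec _" y])
  also have "\<dots> = (\<Sum>i\<in>UNIV. \<Sum>j\<in>UNIV. r i j * w y (bvec j) * w x (bvec i))"
    by (subst sum.swap) (simp add: mult_ac)
  also have "\<dots> = w x (Q y)"
    by (simp add: w_exp2[of x "Q y"] Q_apply sum_distrib_right)
  finally show ?thesis .
qed

lemma adj': "w x (P y) = w (Q x) y"
  using adj[of y x] by (simp add: w_sym)

lemma R_sym: "w (R x) y = w x (R y)"
  by (simp add: R_def w_add1 w_add2 adj) (metis adj' add.commute)


lemma circ_add1: "circ_op sc pr (x + y) z = circ_op sc pr x z + circ_op sc pr y z" by (simp add: circ_op_def lin_simps algebra_simps)
lemma circ_add2: "circ_op sc pr z (x + y) = circ_op sc pr z x + circ_op sc pr z y" by (simp add: circ_op_def lin_simps algebra_simps)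
lemma circ_diff1: "circ_op sc pr (x - y) z = circ_op sc pr x z - circ_op sc pr y z" by (simp add: circ_op_def lin_simps algebra_simps)
lemma circ_diff2: "circ_op sc pr z (x - y) = circ_op sc pr z x - circ_op sc pr z y" by (simp add: circ_op_def lin_simps algebra_simps)
lemma star_add1: "star_op sc pr (x + y) z = star_op sc pr x z + star_op sc pr y z" by (simp add: star_op_def circ_add1 circ_add2 algebra_simps)
lemma star_add2: "star_op sc pr z (x + y) = star_op sc pr z x + star_op sc pr z y" by (simp add: star_op_def circ_add1 circ_add2 algebra_simps)
lemma star_diff1: "star_op sc pr (x - y) z = star_op sc pr x z - star_op sc pr y z" by (simp add: star_op_def circ_diff1 circ_diff2 algebra_simps)
lemma star_diff2: "star_op sc pr z (x - y) = star_op sc pr z x - star_op sc pr z y" by (simp add: star_op_def circ_diff1 circ_diff2 algebra_simps)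
lemma star_comm: "star_op sc pr x y = star_op sc pr y x" by (simp add: star_op_def add.commute)
lemma w_circ_sum: "w x (circ_op sc pr y z + circ_op sc pr z y) = w x (star_op sc pr y z)" by (simp add: star_op_def)

lemma w_odot: "w (odot_op sc pr x u) a = w u (circ_op sc pr a x)"
  by (simp add: odot_op_def w_add1 A1 A2 w_add2 circ_op_def)
lemma w_pr_star: "w (pr u x) b = w u (star_op sc pr x b)"
  by (simp add: A1 star_op_def)

lemma circ_exp1: "circ_op sc pr v y q = (\<Sum>j\<in>UNIV. v j * circ_op sc pr (bvec j) y q)"
  by (simp add: circ_op_def sc_exp1[of v] pr_exp1[of v] sum.distrib distrib_left)
lemma circ_exp2: "circ_op sc pr y v q = (\<Sum>j\<in>UNIV. v j * circ_op sc pr y (bvec j) q)"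
  by (simp add: circ_op_def sc_exp2[of _ v] pr_exp2[of _ v] sum.distrib distrib_left)
lemma star_exp2: "star_op sc pr y v q = (\<Sum>j\<in>UNIV. v j * star_op sc pr y (bvec j) q)"
  by (simp add: star_op_def circ_exp1[of v] circ_exp2[of _ v] sum.distrib distrib_left)

lemma R_apply: "R x q = (\<Sum>i\<in>UNIV. (r i q + r q i) * w x (bvec i))"
  by (simp add: R_def P_apply Q_apply sum.distrib distrib_right)

end

lemma tensmap_id2: "tensmap f id t p q = (\<Sum>i\<in>UNIV. t i q * f (bvec i) p)"
proof -
  have "tensmap f id t p q = (\<Sum>i\<in>UNIV. \<Sum>j\<in>UNIV. (t i j * f (bvec i) p) * bvec j q)"
    by (simp add: tensmap_def)
  also have "\<dots> = (\<Sum>i\<in>UNIV. t i q * f (bvec i) p)"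
    by (simp only: bvec_sum3)
  finally show ?thesis .
qed

lemma tensmap_id1: "tensmap id g t p q = (\<Sum>j\<in>UNIV. t p j * g (bvec j) q)"
proof -
  have "tensmap id g t p q = (\<Sum>j\<in>UNIV. \<Sum>i\<in>UNIV. (t i j * g (bvec j) q) * bvec i p)"
    by (simp add: tensmap_def mult_ac) (subst sum.swap, simp)
  also have "\<dots> = (\<Sum>j\<in>UNIV. t p j * g (bvec j) q)"
    by (simp only: bvec_sum3)
  finally show ?thesis .
qed

locale QLDI = QLD +
  assumes inv: "invariant_tensor sc pr (\<lambda>p q. r p q + tau2 r p q)"
begin

lemma inv1: "(\<Sum>i\<in>UNIV. (r i q + r q i) * odot_op sc pr x (bvec i) p) = (\<Sum>j\<in>UNIV. (r p j + r j p) * circ_op sc pr (bvec j) x q)"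
proof -
  have "(\<lambda>p q. tensmap (\<lambda>y. odot_op sc pr x y) id (\<lambda>p q. r p q + tau2 r p q) p q
      - tensmap id (\<lambda>y. circ_op sc pr y x) (\<lambda>p q. r p q + tau2 r p q) p q) = (\<lambda>p q. 0)"
    using inv unfolding invariant_tensor_def by blast
  then have "tensmap (\<lambda>y. odot_op sc pr x y) id (\<lambda>p q. r p q + tau2 r p q) p q
      = tensmap id (\<lambda>y. circ_op sc pr y x) (\<lambda>p q. r p q + tau2 r p q) p q"
    by (metis (no_types, lifting) eq_iff_diff_eq_0)
  then show ?thesis by (simp add: tensmap_id1 tensmap_id2 tau2_def)
qed

lemma inv2: "(\<Sum>i\<in>UNIV. (r q i + r i q) * star_op sc pr x (bvec i) p) = (\<Sum>j\<in>UNIV. (r j p + r p j) * pr (bvec j) x q)"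
proof -
  have "(\<lambda>p q. tensmap (\<lambda>y. star_op sc pr x y) id (tau2 (\<lambda>p q. r p q + tau2 r p q)) p q
      - tensmap id (\<lambda>y. pr y x) (tau2 (\<lambda>p q. r p q + tau2 r p q)) p q) = (\<lambda>p q. 0)"
    using inv unfolding invariant_tensor_def by blast
  then have "tensmap (\<lambda>y. star_op sc pr x y) id (tau2 (\<lambda>p q. r p q + tau2 r p q)) p q
      = tensmap id (\<lambda>y. pr y x) (tau2 (\<lambda>p q. r p q + tau2 r p q)) p q"
    by (metis (no_types, lifting) eq_iff_diff_eq_0)
  then show ?thesis by (simp add: tensmap_id1 tensmap_id2 tau2_def)
qed


lemma L1: "R (circ_op sc pr a x) = circ_op sc pr (R a) x"
proof (rule ext)
  fix q
  have h: "w (circ_op sc pr a x) (bvec i) = (\<Sum>p\<in>UNIV. odot_op sc pr x (bvec i) p * w (bvec p) a)" for i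
    by (metis w_odot w_sym w_exp1)
  have "R (circ_op sc pr a x) q = (\<Sum>p\<in>UNIV. w (bvec p) a * (\<Sum>i\<in>UNIV. (r i q + r q i) * odot_op sc pr x (bvec i) p))"
    by (simp add: R_apply h sum_distrib_left sum_distrib_right mult_ac) (subst sum.swap, simp)
  also have "\<dots> = (\<Sum>p\<in>UNIV. w (bvec p) a * (\<Sum>j\<in>UNIV. (r p j + r j p) * circ_op sc pr (bvec j) x q))"
    by (simp only: inv1)
  also have "\<dots> = circ_op sc pr (R a) x q"
    by (simp add: circ_exp1[of "R a"] R_apply sum_distrib_left sum_distrib_right mult_ac w_sym[of a]) (subst sum.swap, simp)
  finally show "R (circ_op sc pr a x) q = circ_op sc pr (R a) x q" .
qed

lemma L2: "R (star_op sc pr x b) = star_op sc pr x (R b)"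
proof (rule ext)
  fix p
  have h: "w (star_op sc pr x b) (bvec j) = (\<Sum>q\<in>UNIV. pr (bvec j) x q * w (bvec q) b)" for j
    by (metis w_pr_star w_sym w_exp1)
  have "R (star_op sc pr x b) p = (\<Sum>q\<in>UNIV. w (bvec q) b * (\<Sum>j\<in>UNIV. (r j p + r p j) * pr (bvec j) x q))"
    by (simp add: R_apply h sum_distrib_left sum_distrib_right mult_ac) (subst sum.swap, simp)
  also have "\<dots> = (\<Sum>q\<in>UNIV. w (bvec q) b * (\<Sum>i\<in>UNIV. (r q i + r i q) * star_op sc pr x (bvec i) p))"
    by (simp only: inv2)
  also have "\<dots> = star_op sc pr x (R b) p"
    by (simp add: star_exp2[of _ "R b"] R_apply sum_distrib_left sum_distrib_right mult_ac w_sym[of b]) (subst sum.swap, simp)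
  finally show "R (star_op sc pr x b) p = star_op sc pr x (R b) p" .
qed


lemma L3: "R (circ_op sc pr a b) = circ_op sc pr a (R b)"
  using L2[of a b] by (simp add: star_op_def R_add L1)

lemma L4: "R (sc x y) = sc x (R y)"
  by (rule w_nd2) (simp add: R_sym A2 L3[symmetric])
lemma L5: "sc (R x) y = R (sc x y)"
  by (rule w_nd2) (simp add: R_sym A2 L3[symmetric] L1[symmetric])
lemma L6: "R (pr x y) = pr (R x) y"
  by (rule w_nd2) (simp add: R_sym A1 L3[symmetric] L1[symmetric] R_add)
lemma L7: "pr x (R y) = R (pr x y)"
  by (rule w_nd2) (simp add: R_sym A1 L3[symmetric] L1[symmetric] R_add)

lemma sc_R: "sc x (R y) = sc (R x) y" by (simp add: L4[symmetric] L5)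
lemma pr_R: "pr x (R y) = pr (R x) y" by (simp add: L6 L7)
lemma star_R1: "R (star_op sc pr a b) = star_op sc pr (R a) b"
  by (simp add: star_op_def R_add L1[symmetric] L3[symmetric])

lemma PRQ: "P v = R v - Q v" by (simp add: R_def)

lemma PQ_circ:
  assumes H: "\<And>x y. circ_op sc pr (P x) (P y) = P (circ_op sc pr x (P y) - circ_op sc pr (Q x) y)"
  shows "circ_op sc pr (Q x) (Q y) = Q (circ_op sc pr x (Q y) - circ_op sc pr (P x) y)"
  by (rule centroid[where m="circ_op sc pr" and P=P and Q=Q and R=R]; (rule circ_diff1 circ_diff2 Q_diff R_diff PRQ L1 L3 H)?)

lemma PQ_star:
  assumes H: "\<And>x y. star_op sc pr (P x) (P y) = P (star_op sc pr x (P y) - star_op sc pr (Q x) y)"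
  shows "star_op sc pr (Q x) (Q y) = Q (star_op sc pr x (Q y) - star_op sc pr (P x) y)"
  by (rule centroid[where m="star_op sc pr" and P=P and Q=Q and R=R]; (rule star_diff1 star_diff2 Q_diff R_diff PRQ star_R1 L2 H)?)

lemma P_star:
  assumes H: "\<And>x y. circ_op sc pr (P x) (P y) = P (circ_op sc pr x (P y) - circ_op sc pr (Q x) y)"
  shows "star_op sc pr (P x) (P y) = P (star_op sc pr x (P y) - star_op sc pr (Q x) y)"
proof -
  have key: "circ_op sc pr (P y) x + circ_op sc pr (Q y) x = circ_op sc pr y (P x) + circ_op sc pr y (Q x)"
    using L1[of y x] L3[of y x] by (simp add: R_def circ_add1 circ_add2)
  have key': "circ_op sc pr (P y) x = circ_op sc pr y (P x) + circ_op sc pr y (Q x) - circ_op sc pr (Q y) x"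
    using key by (simp add: algebra_simps eq_diff_eq)
  have arg: "star_op sc pr x (P y) - star_op sc pr (Q x) y
     = (circ_op sc pr x (P y) - circ_op sc pr (Q x) y) + (circ_op sc pr y (P x) - circ_op sc pr (Q y) x)"
    by (simp add: star_op_def key' algebra_simps)
  show ?thesis by (simp only: arg P_add H[symmetric]) (simp add: star_op_def)
qed

lemma Q_to_Psc:
  assumes H: "\<And>x y. circ_op sc pr (Q x) (Q y) = Q (circ_op sc pr x (Q y) - circ_op sc pr (P x) y)"
  shows "sc (P x) (P y) = P (sc x (P y) - sc (Q x) y)"
  by (rule w_nd2) (simp add: A2 adj w_diff1 w_diff2 H Q_diff)

lemma Q_to_Ppr:
  assumes H: "\<And>x y. star_op sc pr (Q x) (Q y) = Q (star_op sc pr x (Q y) - star_op sc pr (P x) y)"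
  shows "pr (P x) (P y) = P (pr x (P y) - pr (Q x) y)"
proof (rule w_nd2)
  fix z
  have v: "P (star_op sc pr y (Q z)) = star_op sc pr (P y) (Q z) - Q (star_op sc pr (P y) z)"
  proof -
    have a: "P (star_op sc pr y (Q z)) = star_op sc pr (R y) (Q z) - Q (star_op sc pr y (Q z))"
      by (simp only: PRQ[of "star_op sc pr y (Q z)"] star_R1)
    have b: "star_op sc pr (R y) (Q z) = star_op sc pr (P y) (Q z) + star_op sc pr (Q y) (Q z)"
      by (simp only: R_def star_add1)
    show ?thesis using a b H[of y z] by (simp add: Q_diff)
  qed
  show "w (pr (P x) (P y)) z = w (P (pr x (P y) - pr (Q x) y)) z"
    by (simp add: w_pr_star adj adj'[symmetric] w_diff1 w_diff2 v)
qed

lemma P_sum: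
  assumes Hs: "sc (P x) (P y) = P (sc x (P y) - sc (Q x) y)"
    and Hp: "pr (P x) (P y) = P (pr x (P y) - pr (Q x) y)"
  shows "circ_op sc pr (P x) (P y) = P (circ_op sc pr x (P y) - circ_op sc pr (Q x) y)"
proof -
  have "circ_op sc pr x (P y) - circ_op sc pr (Q x) y = (sc x (P y) - sc (Q x) y) + (pr x (P y) - pr (Q x) y)"
    by (simp add: circ_op_def algebra_simps)
  then have "P (circ_op sc pr x (P y) - circ_op sc pr (Q x) y) = P (sc x (P y) - sc (Q x) y) + P (pr x (P y) - pr (Q x) y)"
    by (simp only: P_add)
  then show ?thesis by (simp add: circ_op_def Hs Hp)
qed

lemma R_Tmap: "Tmap (\<lambda>p q. r p q + tau2 r p q) (sharp w y) = R y"
  by (rule ext) (simp add: Tmap_def sharp_def R_apply tau2_def)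

lemma tgt_sc: "sc (P x) y + sc x (P y) - sc x (R y) = sc x (P y) - sc (Q x) y"
  by (simp add: sc_R) (simp add: R_def sc_add1 algebra_simps)
lemma tgt_pr: "pr (P x) y + pr x (P y) - pr x (R y) = pr x (P y) - pr (Q x) y"
  by (simp add: pr_R) (simp add: R_def pr_add1 algebra_simps)

lemma bmul_l: "bvec i p * t = (if i = p then t else (0::'zz::field))" by (auto simp add: bvec_def)
lemma mult_if_r: "a * (if P' then b else 0) = (if P' then a * b else (0::'zz::field))" by simp
lemma mult_if_l: "(if P' then b else 0) * a = (if P' then b * a else (0::'zz::field))" by simp
lemma sum_if_out: "(\<Sum>q\<in>A. if P' then f q else 0) = (if P' then (\<Sum>q\<in>A. f q) else (0::'zz::field))" by simp

lemma S_coord: "S_tensor sc pr r p q s =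
   (\<Sum>j\<in>UNIV. \<Sum>l\<in>UNIV. r p j * r q l * circ_op sc pr (bvec l) (bvec j) s)
 - (\<Sum>j\<in>UNIV. \<Sum>k\<in>UNIV. r p j * r k s * odot_op sc pr (bvec j) (bvec k) q)
 - (\<Sum>i\<in>UNIV. \<Sum>k\<in>UNIV. r i q * r k s * sc (bvec i) (bvec k) p)"
  unfolding S_tensor_def
  apply (simp only: right_diff_distrib sum_subtractf)
  apply (simp only: mult.assoc bmul_l mult_if_r mult_if_l sum_if_out)
  apply (simp add: sum.delta sum.delta' mult_ac cong: if_cong)
  apply (simp only: bmul_l sum.delta sum.delta' UNIV_I if_True)
  apply (simp add: mult_ac)
  done
lemma sharp_add: "sharp w (x + y) = sharp w x + sharp w y"
  by (rule ext) (simp add: sharp_def w_add1)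
lemma sharp_sm: "sharp w (smul c x) = smul c (sharp w x)"
  by (rule ext) (simp only: sharp_def w_sm1, simp add: smul_def sharp_def)
lemma sharp_inj: "sharp w x = sharp w y \<Longrightarrow> x = y"
proof -
  assume h: "sharp w x = sharp w y"
  have "w x (bvec i) = w y (bvec i)" for i using fun_cong[OF h, of i] by (simp add: sharp_def)
  then have "w x z = w y z" for z by (simp add: w_exp2[of x z] w_exp2[of y z])
  then show "x = y" by (rule w_nd2)
qed

lemma sharp_surj: "surj (sharp w)"
proof -
  have lin: "Vector_Spaces.linear smul smul (sharp w)"
    by (rule module_hom_iff_linear[THEN iffD1], unfold module_hom_iff) (intro conjI mod_smul allI sharp_add sharp_sm)
  show ?thesis
    by (rule finite_dimensional_vector_space.linear_inj_imp_surj[OF fdv lin]) (meson injI sharp_inj)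
qed

definition "fb p = inv (sharp w) (bvec p)"

lemma fb: "sharp w (fb p) = bvec p"
  unfolding fb_def by (rule surj_f_inv_f[OF sharp_surj])

lemma w_fb: "w (fb p) (bvec i) = bvec p i"
  using fun_cong[OF fb[of p], of i] by (simp add: sharp_def)

lemma x_expand: "x = (\<Sum>p\<in>UNIV. smul (w x (bvec p)) (fb p))"
proof (rule sharp_inj)
  have "sharp w (\<Sum>p\<in>UNIV. smul (w x (bvec p)) (fb p)) = (\<Sum>p\<in>UNIV. smul (w x (bvec p)) (sharp w (fb p)))"
    by (rule gen_expand_v[OF sharp_add sharp_sm]) simp
  also have "\<dots> = (\<Sum>p\<in>UNIV. smul (sharp w x p) (bvec p))" by (simp only: fb, simp add: sharp_def)
  also have "\<dots> = sharp w x" by (rule basis_expand[symmetric])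
  finally show "sharp w x = sharp w (\<Sum>p\<in>UNIV. smul (w x (bvec p)) (fb p))" by simp
qed

lemma lin_fb:
  assumes add: "\<And>a b. \<phi> (a + b) = \<phi> a + \<phi> b" and sm: "\<And>c a. \<phi> (smul c a) = c * \<phi> a"
  shows "\<phi> x = (\<Sum>p\<in>UNIV. w x (bvec p) * \<phi> (fb p))"
proof -
  have "\<phi> x = \<phi> (\<Sum>p\<in>UNIV. smul (w x (bvec p)) (fb p))" using x_expand[of x] by (rule arg_cong)
  also have "\<dots> = (\<Sum>p\<in>UNIV. w x (bvec p) * \<phi> (fb p))" by (rule gen_expand_s[OF add sm]) simp
  finally show ?thesis .
qed

lemma P_sm: "P (smul c x) = smul c (P x)"
  by (rule ext) (simp only: P_apply w_sm1, simp add: P_apply smul_def sum_distrib_left mult_ac)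
lemma Q_sm: "Q (smul c x) = smul c (Q x)"
  by (rule ext) (simp only: Q_apply w_sm1, simp add: Q_apply smul_def sum_distrib_left mult_ac)
lemma circ_sm1: "circ_op sc pr (smul c x) y = smul c (circ_op sc pr x y)"
  by (simp add: circ_op_def sc_sm1 pr_sm1 smul_add)
lemma circ_sm2: "circ_op sc pr y (smul c x) = smul c (circ_op sc pr y x)"
  by (simp add: circ_op_def sc_sm2 pr_sm2 smul_add)
lemma odot_add1: "odot_op sc pr (x + y) z = odot_op sc pr x z + odot_op sc pr y z"
  by (simp add: odot_op_def sc_add1 pr_add2 algebra_simps)
lemma odot_add2: "odot_op sc pr z (x + y) = odot_op sc pr z x + odot_op sc pr z y"
  by (simp add: odot_op_def sc_add2 pr_add1 algebra_simps)
lemma odot_sm1: "odot_op sc pr (smul c x) y = smul c (odot_op sc pr x y)"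
  by (simp add: odot_op_def sc_sm1 pr_sm2 smul_add)
lemma odot_sm2: "odot_op sc pr y (smul c x) = smul c (odot_op sc pr y x)"
  by (simp add: odot_op_def sc_sm2 pr_sm1 smul_add)

definition "E x y z = w z (circ_op sc pr (P y) (P x)) - w y (odot_op sc pr (P x) (Q z)) - w x (sc (Q y) (Q z))"

lemma E_add1: "E (a + b) y z = E a y z + E b y z"
  by (simp add: E_def P_add circ_add2 odot_add1 w_add1 w_add2 algebra_simps)
lemma E_add2: "E x (a + b) z = E x a z + E x b z"
  by (simp add: E_def P_add Q_add circ_add1 sc_add1 w_add1 w_add2 algebra_simps)
lemma E_add3: "E x y (a + b) = E x y a + E x y b"
  by (simp add: E_def Q_add odot_add2 sc_add2 w_add1 w_add2 algebra_simps)
lemma E_sm1: "E (smul c a) y z = c * E a y z"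
  by (simp add: E_def P_sm circ_sm2 odot_sm1 w_sm1 w_sm2 algebra_simps)
lemma E_sm2: "E x (smul c a) z = c * E x a z"
  by (simp add: E_def P_sm Q_sm circ_sm1 sc_sm1 w_sm1 w_sm2 algebra_simps)
lemma E_sm3: "E x y (smul c a) = c * E x y a"
  by (simp add: E_def Q_sm odot_sm2 sc_sm2 w_sm1 w_sm2 algebra_simps)

lemma E_zero:
  assumes h: "\<And>p q s. E (fb p) (fb q) (fb s) = 0"
  shows "E x y z = 0"
proof -
  have 1: "E (fb p) (fb q) z = 0" for p q
    using lin_fb[of "\<lambda>v. E (fb p) (fb q) v", OF E_add3 E_sm3] h by simp
  have 2: "E (fb p) y z = 0" for p
    using lin_fb[of "\<lambda>v. E (fb p) v z", OF E_add2 E_sm2] 1 by simp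
  show ?thesis
    using lin_fb[of "\<lambda>v. E v y z", OF E_add1 E_sm1] 2 by simp
qed

lemma E_D: "E x y z = w (circ_op sc pr (P y) (P x) - P (circ_op sc pr y (P x) - circ_op sc pr (Q y) x)) z"
proof -
  have t1: "w z (circ_op sc pr (P y) (P x)) = w (circ_op sc pr (P y) (P x)) z" by (rule w_sym)
  have t2: "w y (odot_op sc pr (P x) (Q z)) = w (P (circ_op sc pr y (P x))) z"
    by (metis w_sym w_odot adj)
  have t3: "w x (sc (Q y) (Q z)) = - w (P (circ_op sc pr (Q y) x)) z"
    by (metis w_sym A2 adj)
  show ?thesis by (simp add: E_def t1 t2 t3 w_diff1 P_diff)
qed

lemma Pfb: "P (fb p) = r p"
  by (rule ext) (simp add: P_apply w_fb bvec_sum2)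
lemma Qfb: "Q (fb s) = (\<lambda>k. r k s)"
  by (rule ext) (simp add: Q_apply w_fb bvec_sum2)
lemma wfb: "w (fb s) v = v s"
  by (simp add: w_exp2[of "fb s" v] w_fb bvec_sum2)

lemma sc_bil: "sc u v p = (\<Sum>i\<in>UNIV. \<Sum>k\<in>UNIV. u i * v k * sc (bvec i) (bvec k) p)"
  by (subst sc_exp1[of u v]) (simp only: sc_exp2[of _ v] sum_distrib_left mult.assoc)
lemma pr_bil: "pr u v p = (\<Sum>i\<in>UNIV. \<Sum>k\<in>UNIV. u i * v k * pr (bvec i) (bvec k) p)"
  by (subst pr_exp1[of u v]) (simp only: pr_exp2[of _ v] sum_distrib_left mult.assoc)
lemma circ_bil: "circ_op sc pr u v p = (\<Sum>i\<in>UNIV. \<Sum>k\<in>UNIV. u i * v k * circ_op sc pr (bvec i) (bvec k) p)"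
  by (simp add: circ_op_def sc_bil[of u v] pr_bil[of u v] sum.distrib distrib_left)
lemma odot_bil: "odot_op sc pr u v p = (\<Sum>i\<in>UNIV. \<Sum>k\<in>UNIV. u i * v k * odot_op sc pr (bvec i) (bvec k) p)"
proof -
  have a: "pr v u p = (\<Sum>i\<in>UNIV. \<Sum>k\<in>UNIV. u i * v k * pr (bvec k) (bvec i) p)"
    by (simp only: pr_bil[of v u]) (subst sum.swap, simp add: mult_ac)
  show ?thesis by (simp add: odot_op_def sc_bil[of u v] a sum.distrib distrib_left)
qed

lemma E_S: "E (fb p) (fb q) (fb s) = S_tensor sc pr r p q s"
proof -
  have c1: "circ_op sc pr (r q) (r p) s = (\<Sum>j\<in>UNIV. \<Sum>l\<in>UNIV. r p j * r q l * circ_op sc pr (bvec l) (bvec j) s)"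
    by (simp only: circ_bil[of "r q"]) (subst sum.swap, simp add: mult_ac)
  show ?thesis
    by (simp add: E_def Pfb Qfb wfb c1 odot_bil[of "r p"] sc_bil[of "\<lambda>k. r k q"] S_coord)
qed
lemma S_iff_Pc: "S_tensor sc pr r = (\<lambda>p q s. 0) \<longleftrightarrow>
   (\<forall>x y. circ_op sc pr (P x) (P y) = P (circ_op sc pr x (P y) - circ_op sc pr (Q x) y))"
proof
  assume S: "S_tensor sc pr r = (\<lambda>p q s. 0)"
  have h: "E (fb p) (fb q) (fb s) = 0" for p q s by (simp add: E_S S)
  show "\<forall>x y. circ_op sc pr (P x) (P y) = P (circ_op sc pr x (P y) - circ_op sc pr (Q x) y)"
  proof (intro allI)
    fix x y
    have "w (circ_op sc pr (P x) (P y) - P (circ_op sc pr x (P y) - circ_op sc pr (Q x) y)) z = 0" for z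
      using E_D[of y x z] E_zero[OF h, of y x z] by simp
    then have "circ_op sc pr (P x) (P y) - P (circ_op sc pr x (P y) - circ_op sc pr (Q x) y) = 0"
      by (rule w_nd)
    then show "circ_op sc pr (P x) (P y) = P (circ_op sc pr x (P y) - circ_op sc pr (Q x) y)"
      by simp
  qed
next
  assume Pc: "\<forall>x y. circ_op sc pr (P x) (P y) = P (circ_op sc pr x (P y) - circ_op sc pr (Q x) y)"
  show "S_tensor sc pr r = (\<lambda>p q s. 0)"
  proof (intro ext)
    fix p q s
    have "S_tensor sc pr r p q s = E (fb p) (fb q) (fb s)" by (simp add: E_S)
    also have "\<dots> = 0" using E_D[of "fb p" "fb q" "fb s"] Pc by (simp add: w_0)
    finally show "S_tensor sc pr r p q s = 0" .
  qed
qed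

lemma main_loc: "S_tensor sc pr r = (\<lambda>p q s. 0) \<longleftrightarrow>
   (\<forall>x y. sc (P x) (P y) = P (sc x (P y) - sc (Q x) y) \<and> pr (P x) (P y) = P (pr x (P y) - pr (Q x) y))"
proof
  assume S: "S_tensor sc pr r = (\<lambda>p q s. 0)"
  have Pc: "\<And>x y. circ_op sc pr (P x) (P y) = P (circ_op sc pr x (P y) - circ_op sc pr (Q x) y)"
    using S S_iff_Pc by blast
  have Qc: "\<And>x y. circ_op sc pr (Q x) (Q y) = Q (circ_op sc pr x (Q y) - circ_op sc pr (P x) y)"
    by (rule PQ_circ[OF Pc])
  have Ps: "\<And>x y. star_op sc pr (P x) (P y) = P (star_op sc pr x (P y) - star_op sc pr (Q x) y)"
    by (rule P_star[OF Pc])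
  have Qs: "\<And>x y. star_op sc pr (Q x) (Q y) = Q (star_op sc pr x (Q y) - star_op sc pr (P x) y)"
    by (rule PQ_star[OF Ps])
  show "\<forall>x y. sc (P x) (P y) = P (sc x (P y) - sc (Q x) y) \<and> pr (P x) (P y) = P (pr x (P y) - pr (Q x) y)"
    using Q_to_Psc[OF Qc] Q_to_Ppr[OF Qs] by blast
next
  assume H: "\<forall>x y. sc (P x) (P y) = P (sc x (P y) - sc (Q x) y) \<and> pr (P x) (P y) = P (pr x (P y) - pr (Q x) y)"
  have "\<forall>x y. circ_op sc pr (P x) (P y) = P (circ_op sc pr x (P y) - circ_op sc pr (Q x) y)"
    using H P_sum by blast
  then show "S_tensor sc pr r = (\<lambda>p q s. 0)" using S_iff_Pc by blast
qed


end


theorem mainTheorem16: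
  fixes sc pr :: "('k::field, 'n::finite) op"
    and w :: "('n \<Rightarrow> 'k) \<Rightarrow> ('n \<Rightarrow> 'k) \<Rightarrow> 'k"
    and r :: "'n \<Rightarrow> 'n \<Rightarrow> 'k"
    and P :: "('n \<Rightarrow> 'k) \<Rightarrow> ('n \<Rightarrow> 'k)"
  assumes "quadratic_LD_algebra sc pr w"
    and "invariant_tensor sc pr (\<lambda>p q. r p q + tau2 r p q)"
    and "\<And>x. P x = Tmap r (sharp w x)"
  shows "S_tensor sc pr r = (\<lambda>p q s. 0) \<longleftrightarrow>
    (\<forall>x y.
      sc (P x) (P y) = P (sc (P x) y + sc x (P y)
                          - sc x (Tmap (\<lambda>p q. r p q + tau2 r p q) (sharp w y))) \<and>
      pr (P x) (P y) = P (pr (P x) y + pr x (P y)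
                          - pr x (Tmap (\<lambda>p q. r p q + tau2 r p q) (sharp w y))))"
proof -
  interpret L: QLDI sc pr w r
    using assms(1,2) by (simp add: QLDI_def QLD_def QLDI_axioms_def)
  have PP: "P = L.P" by (rule ext) (simp add: assms(3) L.P_def)
  show ?thesis
    unfolding PP L.R_Tmap L.tgt_sc L.tgt_pr by (rule L.main_loc)
qed

end
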